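(* Let $G$ be a graph, $\varphi$ a $4$-colouring of $G$, and $v$ a vertex of $G$ of degree $4$ that is $\varphi$-frozen. If $v$ has two $\varphi$-frozen neighbours $u_1,u_2$ with $\varphi(u_1)=\varphi(u_2)$, then all neighbours of $v$ are $\varphi$-frozen.
   Context: Colourings are proper $4$-colourings (colours $\{1,2,3,4\}$); a recolouring sequence is a sequence of proper $4$-colourings in which consecutive ones differ on exactly one vertex. A vertex $v$ is $\varphi$-frozen if $\gamma(v)=\varphi(v)$ for every $4$-colouring $\gamma$ obtainable from $\varphi$ by a recolouring sequence. *)

theory Defs
  imports Main
begin

definition graph :: "'a set \<Rightarrow> ('a \<Rightarrow> 'a \<Rightarrow> bool) \<Rightarrow> bool" where
  "graph V E \<longleftrightarrow> finite V \<and> (\<forall>x y. E x y \<longrightarrow> x \<in> V \<and> y \<in> V) \<and>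
     (\<forall>x y. E x y \<longrightarrow> E y x) \<and> (\<forall>x. \<not> E x x)"

definition neighbours :: "('a \<Rightarrow> 'a \<Rightarrow> bool) \<Rightarrow> 'a \<Rightarrow> 'a set" where
  "neighbours E v = {u. E v u}"

definition degree :: "('a \<Rightarrow> 'a \<Rightarrow> bool) \<Rightarrow> 'a \<Rightarrow> nat" where
  "degree E v = card (neighbours E v)"

definition colouring4 :: "'a set \<Rightarrow> ('a \<Rightarrow> 'a \<Rightarrow> bool) \<Rightarrow> ('a \<Rightarrow> nat) \<Rightarrow> bool" where
  "colouring4 V E c \<longleftrightarrow> (\<forall>x\<in>V. c x \<in> {1,2,3,4}) \<and> (\<forall>x. x \<notin> V \<longrightarrow> c x = 0) \<and>
     (\<forall>x y. E x y \<longrightarrow> c x \<noteq> c y)"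

definition recolour_step :: "'a set \<Rightarrow> ('a \<Rightarrow> 'a \<Rightarrow> bool) \<Rightarrow> ('a \<Rightarrow> nat) \<Rightarrow> ('a \<Rightarrow> nat) \<Rightarrow> bool" where
  "recolour_step V E c d \<longleftrightarrow> colouring4 V E c \<and> colouring4 V E d \<and>
     (\<exists>!x. c x \<noteq> d x)"

definition reachable :: "'a set \<Rightarrow> ('a \<Rightarrow> 'a \<Rightarrow> bool) \<Rightarrow> ('a \<Rightarrow> nat) \<Rightarrow> ('a \<Rightarrow> nat) \<Rightarrow> bool" where
  "reachable V E = (recolour_step V E)\<^sup>*\<^sup>*"

definition frozen :: "'a set \<Rightarrow> ('a \<Rightarrow> 'a \<Rightarrow> bool) \<Rightarrow> ('a \<Rightarrow> nat) \<Rightarrow> 'a \<Rightarrow> bool" where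
  "frozen V E \<phi> v \<longleftrightarrow> (\<forall>\<gamma>. colouring4 V E \<gamma> \<longrightarrow> reachable V E \<phi> \<gamma> \<longrightarrow> \<gamma> v = \<phi> v)"

end

theory Submission
  imports Defs
begin

lemma reach_col:
  assumes "reachable V E \<phi> \<gamma>" "colouring4 V E \<phi>"
  shows "colouring4 V E \<gamma>"
  using assms unfolding reachable_def
  by (induction rule: rtranclp_induct) (auto simp: recolour_step_def)

lemma cover:
  assumes g: "graph V E" and c: "colouring4 V E \<phi>" and vV: "v \<in> V"
    and fr: "frozen V E \<phi> v" and r: "reachable V E \<phi> \<gamma>"
    and k: "k \<in> {1,2,3,4}" "k \<noteq> \<gamma> v"
  shows "k \<in> \<gamma> ` neighbours E v"
proof (rule ccontr)
  assume nk: "k \<notin> \<gamma> ` neighbours E v"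
  have cg: "colouring4 V E \<gamma>" using reach_col r c by blast
  define \<delta> where "\<delta> = \<gamma>(v := k)"
  have cd: "colouring4 V E \<delta>"
    unfolding colouring4_def
  proof (intro conjI allI impI ballI)
    fix x assume "x \<in> V" thus "\<delta> x \<in> {1,2,3,4}" using cg k unfolding \<delta>_def colouring4_def by auto
  next
    fix x assume "x \<notin> V" thus "\<delta> x = 0" using cg vV unfolding \<delta>_def colouring4_def by auto
  next
    fix x y assume e: "E x y"
    have "x \<noteq> y" using g e unfolding graph_def by auto
    moreover have "E y x" using g e unfolding graph_def by auto
    ultimately show "\<delta> x \<noteq> \<delta> y" using cg e nk unfolding \<delta>_def colouring4_def neighbours_def
      by (auto simp: image_iff)
  qed
  have "\<exists>!x. \<gamma> x \<noteq> \<delta> x"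
    by (rule ex1I[of _ v]) (use k in \<open>auto simp: \<delta>_def split: if_splits\<close>)
  hence "recolour_step V E \<gamma> \<delta>" using cg cd unfolding recolour_step_def by auto
  hence "reachable V E \<phi> \<delta>" using r unfolding reachable_def by auto
  hence "\<delta> v = \<phi> v" using fr cd unfolding frozen_def by auto
  moreover have "\<gamma> v = \<phi> v" using fr cg r unfolding frozen_def by auto
  ultimately show False using k unfolding \<delta>_def by auto
qed

lemma card2: "card {x, y::nat} \<le> 2"
  by (simp add: card_insert_if)
lemma arith4:
  fixes a b c d :: nat
  assumes "b \<in> {1,2,3,4}" "{1,2,3,4} - {b} \<subseteq> {a,c,d}"
  shows "a \<noteq> c \<and> c \<noteq> d \<and> a \<noteq> d"
proof -
  have "card ({1,2,3,4::nat}-{b}) = 3" using assms(1) by (subst card_Diff_singleton) auto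
  moreover have "card ({1,2,3,4::nat}-{b}) \<le> card {a,c,d}" by (rule card_mono) (use assms(2) in auto)
  ultimately have "3 \<le> card {a,c,d}" by simp
  moreover have "a = c \<or> c = d \<or> a = d \<Longrightarrow> card {a,c,d} \<le> 2"
    using card2 by (metis insert_absorb2 insert_commute)
  ultimately show ?thesis by linarith
qed

theorem lemma8:
  fixes V :: "'a set" and E :: "'a \<Rightarrow> 'a \<Rightarrow> bool" and \<phi> :: "'a \<Rightarrow> nat" and v u1 u2 :: 'a
  assumes "graph V E"
    and "colouring4 V E \<phi>"
    and "v \<in> V"
    and "degree E v = 4"
    and "frozen V E \<phi> v"
    and "E v u1" and "E v u2" and "u1 \<noteq> u2"
    and "frozen V E \<phi> u1" and "frozen V E \<phi> u2"
    and "\<phi> u1 = \<phi> u2"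
  shows "\<forall>u. E v u \<longrightarrow> frozen V E \<phi> u"
proof -
  note g = assms(1) and c = assms(2) and vV = assms(3)
  let ?N = "neighbours E v"
  have fin: "finite ?N" using g unfolding graph_def neighbours_def
    by (metis (no_types, lifting) mem_Collect_eq rev_finite_subset subsetI)
  have u12: "u1 \<in> ?N" "u2 \<in> ?N" using assms(6,7) unfolding neighbours_def by auto
  have "card (?N - {u1,u2}) = 2"
    using assms(4,8) u12 fin unfolding degree_def by (simp add: card_Diff_subset)
  then obtain w1 w2 where w: "?N - {u1,u2} = {w1,w2}" "w1 \<noteq> w2" by (meson card_2_iff)
  have N: "?N = {u1,u2,w1,w2}" using w u12 by auto
  have Ew: "E v w1" "E v w2" using N unfolding neighbours_def by auto
  have wne: "w1 \<noteq> u1" "w1 \<noteq> u2" "w2 \<noteq> u1" "w2 \<noteq> u2" using w by auto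
  have wV: "w1 \<in> V" "w2 \<in> V" using g Ew unfolding graph_def by auto
  have bcol: "\<phi> v \<in> {1,2,3,4}" "\<phi> w1 \<in> {1,2,3,4}" "\<phi> w2 \<in> {1,2,3,4}"
    using c vV wV unfolding colouring4_def by auto
  have bw: "\<phi> w1 \<noteq> \<phi> v" "\<phi> w2 \<noteq> \<phi> v" using c Ew unfolding colouring4_def by metis+
  have cov0: "{1,2,3,4} - {\<phi> v} \<subseteq> {\<phi> u1, \<phi> w1, \<phi> w2}"
  proof
    fix k assume "k \<in> {1,2,3,4} - {\<phi> v}"
    hence "k \<in> \<phi> ` ?N" using cover[OF g c vV assms(5)] unfolding reachable_def by auto
    thus "k \<in> {\<phi> u1, \<phi> w1, \<phi> w2}" using N assms(11) by auto
  qed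
  have dist: "\<phi> u1 \<noteq> \<phi> w1 \<and> \<phi> w1 \<noteq> \<phi> w2 \<and> \<phi> u1 \<noteq> \<phi> w2"
    using arith4[OF bcol(1) cov0] .
  have inv: "\<gamma> w1 = \<phi> w1 \<and> \<gamma> w2 = \<phi> w2" if r: "reachable V E \<phi> \<gamma>" for \<gamma>
    using r unfolding reachable_def
  proof (induction rule: rtranclp_induct)
    case base thus ?case by simp
  next
    case (step \<gamma> \<delta>)
    have rd: "reachable V E \<phi> \<delta>" using step(1,2) unfolding reachable_def by auto
    have cd: "colouring4 V E \<delta>" using step(2) unfolding recolour_step_def by auto
    have fv: "\<delta> v = \<phi> v" "\<delta> u1 = \<phi> u1" "\<delta> u2 = \<phi> u2"
      using assms(5,9,10) rd cd unfolding frozen_def by auto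
    have cov: "{1,2,3,4} - {\<phi> v} \<subseteq> {\<phi> u1, \<delta> w1, \<delta> w2}"
    proof
      fix k assume "k \<in> {1,2,3,4} - {\<phi> v}"
      hence "k \<in> \<delta> ` ?N" using cover[OF g c vV assms(5) rd] fv by auto
      thus "k \<in> {\<phi> u1, \<delta> w1, \<delta> w2}" using N fv assms(11) by auto
    qed
    have "\<delta> w1 = \<gamma> w1 \<or> \<delta> w2 = \<gamma> w2"
      using step(2) w(2) unfolding recolour_step_def by metis
    thus ?case
    proof
      assume h: "\<delta> w1 = \<gamma> w1"
      hence "\<delta> w1 = \<phi> w1" using step(3) by simp
      moreover have "\<phi> w2 \<in> {1,2,3,4} - {\<phi> v}" using bcol bw by auto
      hence "\<phi> w2 \<in> {\<phi> u1, \<delta> w1, \<delta> w2}" using cov by blast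
      ultimately show ?case using dist by force
    next
      assume h: "\<delta> w2 = \<gamma> w2"
      hence "\<delta> w2 = \<phi> w2" using step(3) by simp
      moreover have "\<phi> w1 \<in> {1,2,3,4} - {\<phi> v}" using bcol bw by auto
      hence "\<phi> w1 \<in> {\<phi> u1, \<delta> w1, \<delta> w2}" using cov by blast
      ultimately show ?case using dist by force
    qed
  qed
  show ?thesis
  proof (intro allI impI)
    fix u assume "E v u"
    hence "u \<in> {u1,u2,w1,w2}" using N unfolding neighbours_def by blast
    thus "frozen V E \<phi> u" using assms(9,10) inv unfolding frozen_def by auto
  qed
qed

end
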